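(* Let $N\in\mathbb{N}$ and $y\in\Gamma_N$. Then the group $G=\langle R,s\rangle\subset GL_3(\mathbb{R})$ stabilises $X_{N,y}(\mathbb{Z})$: for every $P\in X_{N,y}(\mathbb{Z})$, the orbit $\{g(P)\mid g\in G\}$ is contained in $X_{N,y}(\mathbb{Z})$.
   Context: $R=\frac12\begin{pmatrix}1&0&-3\\0&2&0\\1&0&1\end{pmatrix}$ and $s$ is the reflection $s(a,b,c)=(a,b,-c)$. $X_{N,y}(\mathbb{Z})=\{(a,y,b)\mid a,b\in\mathbb{Z},\ a^2+2y^2+3b^2=48N+30\}$. $I_N$ is the set of odd integers $y$ with $|y|<\sqrt{15+24N}$. For $y\in I_N$, write $y^2=3p$ or $y^2=3p+1$ with $p\in\mathbb{Z}$, set $M_y=16N+10-2p$, $\mathcal{I}_{N,y}=\{m\in\mathbb{Z}\mid|m|\le\lfloor\sqrt{48N+30-2y^2}\rfloor\}$, $\Omega_{N,y}(0)=\{m\in\mathcal{I}_{N,y}\mid m^2\equiv0\ (3),\ M_y-m^2/3\text{ is a perfect square}\}$, $\Omega_{N,y}(1)=\{m\in\mathcal{I}_{N,y}\mid m^2\equiv1\ (3),\ M_y-(m^2+2)/3\text{ is a perfect square}\}$, and $\Gamma_N=\{y\in I_N\mid\Omega_{N,y}(0)\ne\emptyset\text{ or }\Omega_{N,y}(1)\ne\emptyset\}$. *)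

theory Defs
  imports "HOL-Analysis.Analysis"
begin

definition Rmat :: "real^3^3" where
  "Rmat = vector [vector [1/2, 0, -3/2], vector [0, 1, 0], vector [1/2, 0, 1/2]]"

definition smat :: "real^3^3" where
  "smat = vector [vector [1, 0, 0], vector [0, 1, 0], vector [0, 0, -1]]"

inductive_set genGroup :: "(real^3^3) set" where
  gen_one: "mat 1 \<in> genGroup"
| gen_R: "Rmat \<in> genGroup"
| gen_s: "smat \<in> genGroup"
| gen_mult: "g \<in> genGroup \<Longrightarrow> h \<in> genGroup \<Longrightarrow> g ** h \<in> genGroup"
| gen_inv: "g \<in> genGroup \<Longrightarrow> matrix_inv g \<in> genGroup"

definition XNy :: "nat \<Rightarrow> int \<Rightarrow> (real^3) set" where
  "XNy N y = {v. \<exists>a b :: int. v = vector [real_of_int a, real_of_int y, real_of_int b]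
                 \<and> a^2 + 2*y^2 + 3*b^2 = 48 * int N + 30}"

definition I_N :: "nat \<Rightarrow> int set" where
  "I_N N = {y. odd y \<and> real_of_int \<bar>y\<bar> < sqrt (15 + 24 * real N)}"

definition is_square :: "int \<Rightarrow> bool" where
  "is_square x \<longleftrightarrow> (\<exists>k::int. x = k^2)"

text \<open>p with y^2 = 3p or y^2 = 3p+1 (y^2 mod 3 is 0 or 1, so p = y^2 div 3).\<close>
definition p_of :: "int \<Rightarrow> int" where
  "p_of y = y^2 div 3"

definition M_y :: "nat \<Rightarrow> int \<Rightarrow> int" where
  "M_y N y = 16 * int N + 10 - 2 * p_of y"

definition I_Ny :: "nat \<Rightarrow> int \<Rightarrow> int set" where
  "I_Ny N y = {m. real_of_int \<bar>m\<bar> \<le> of_int \<lfloor>sqrt (real_of_int (48 * int N + 30 - 2 * y^2))\<rfloor>}"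

definition Omega0 :: "nat \<Rightarrow> int \<Rightarrow> int set" where
  "Omega0 N y = {m \<in> I_Ny N y. m^2 mod 3 = 0 \<and> is_square (M_y N y - m^2 div 3)}"

definition Omega1 :: "nat \<Rightarrow> int \<Rightarrow> int set" where
  "Omega1 N y = {m \<in> I_Ny N y. m^2 mod 3 = 1 \<and> is_square (M_y N y - (m^2 + 2) div 3)}"

definition Gamma_N :: "nat \<Rightarrow> int set" where
  "Gamma_N N = {y \<in> I_N N. Omega0 N y \<noteq> {} \<or> Omega1 N y \<noteq> {}}"

end

theory Submission
  imports Defs
begin

lemma R_apply: "Rmat *v vector [x, u, z] = vector [x/2 - 3*z/2, u, x/2 + z/2]"
  unfolding Rmat_def
  by (simp add: vec_eq_iff forall_3 matrix_vector_mult_def sum_3 vector_3)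

lemma s_apply: "smat *v vector [x, u, z] = vector [x, u, -z]"
  unfolding smat_def
  by (simp add: vec_eq_iff forall_3 matrix_vector_mult_def sum_3 vector_3)

lemma R_inv: "invertible Rmat"
  unfolding invertible_def
  apply (rule exI[of _ "vector [vector [1/2, 0, 3/2], vector [0, 1, 0], vector [-1/2, 0, 1/2]]"])
  unfolding Rmat_def
  by (simp add: vec_eq_iff forall_3 matrix_matrix_mult_def sum_3 vector_3 mat_def)

lemma s_inv: "invertible smat"
  unfolding invertible_def
  apply (rule exI[of _ smat])
  unfolding smat_def
  by (simp add: vec_eq_iff forall_3 matrix_matrix_mult_def sum_3 vector_3 mat_def)

lemma par: assumes "a^2 + 2*y^2 + 3*b^2 = 48 * int N + 30" shows "even (a + b)"
proof -
  have "a^2 + 3*b^2 = 2*(24*int N + 15 - y^2)" using assms by simp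
  then have "even (a^2+3*b^2)" by (metis dvd_triv_left)
  then show ?thesis by simp
qed

lemma R_maps: "P \<in> XNy N y \<Longrightarrow> Rmat *v P \<in> XNy N y"
proof -
  assume "P \<in> XNy N y"
  then obtain a b where P: "P = vector [real_of_int a, real_of_int y, real_of_int b]"
    and e: "a^2 + 2*y^2 + 3*b^2 = 48 * int N + 30" unfolding XNy_def by blast
  from par[OF e] obtain k where k: "a + b = 2*k" by blast
  have ha: "a = 2*k - b" using k by simp
  have "Rmat *v P = vector [real_of_int (k - 2*b), real_of_int y, real_of_int k]"
    unfolding P R_apply ha by (simp add: vec_eq_iff forall_3 vector_3 field_simps)
  moreover have "(k-2*b)^2 + 3*k^2 = a^2 + 3*b^2"
    unfolding ha by (simp add: power2_eq_square algebra_simps)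
  then have "(k-2*b)^2 + 2*y^2 + 3*k^2 = 48 * int N + 30"
    using e by linarith
  ultimately show ?thesis unfolding XNy_def by blast
qed

lemma R_onto: "P \<in> XNy N y \<Longrightarrow> \<exists>Q\<in>XNy N y. P = Rmat *v Q"
proof -
  assume "P \<in> XNy N y"
  then obtain a b where P: "P = vector [real_of_int a, real_of_int y, real_of_int b]"
    and e: "a^2 + 2*y^2 + 3*b^2 = 48 * int N + 30" unfolding XNy_def by blast
  from par[OF e] obtain k where k: "a + b = 2*k" by blast
  have ha: "a = 2*k - b" using k by simp
  define Q :: "real^3" where "Q = vector [real_of_int (k + b), real_of_int y, real_of_int (b - k)]"
  have "P = Rmat *v Q"
    unfolding P Q_def R_apply ha by (simp add: vec_eq_iff forall_3 vector_3 field_simps)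
  moreover have "(k+b)^2 + 3*(b-k)^2 = a^2 + 3*b^2"
    unfolding ha by (simp add: power2_eq_square algebra_simps)
  then have "(k+b)^2 + 2*y^2 + 3*(b-k)^2 = 48 * int N + 30"
    using e by linarith
  ultimately show ?thesis unfolding XNy_def Q_def by blast
qed

lemma s_maps: "P \<in> XNy N y \<Longrightarrow> smat *v P \<in> XNy N y"
proof -
  assume "P \<in> XNy N y"
  then obtain a b where P: "P = vector [real_of_int a, real_of_int y, real_of_int b]"
    and e: "a^2 + 2*y^2 + 3*b^2 = 48 * int N + 30" unfolding XNy_def by blast
  have "smat *v P = vector [real_of_int a, real_of_int y, real_of_int (-b)]"
    unfolding P s_apply by simp
  moreover have "a^2 + 2*y^2 + 3*(-b)^2 = 48 * int N + 30" using e by simp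
  ultimately show ?thesis unfolding XNy_def by blast
qed

lemma s_onto: "P \<in> XNy N y \<Longrightarrow> \<exists>Q\<in>XNy N y. P = smat *v Q"
proof -
  assume "P \<in> XNy N y"
  moreover have "smat *v (smat *v P) = P"
    unfolding smat_def
    by (simp add: vec_eq_iff forall_3 matrix_vector_mult_def sum_3 vector_3)
  ultimately show ?thesis using s_maps by metis
qed

lemma minv: assumes "invertible (g::real^3^3)"
  shows "matrix_inv g ** g = mat 1" "g ** matrix_inv g = mat 1"
proof -
  have "\<exists>A'. g ** A' = mat 1 \<and> A' ** g = mat 1" using assms unfolding invertible_def .
  then have "g ** matrix_inv g = mat 1 \<and> matrix_inv g ** g = mat 1"
    unfolding matrix_inv_def by (rule someI_ex)
  then show "matrix_inv g ** g = mat 1" "g ** matrix_inv g = mat 1" by auto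
qed

lemma inv_gen:
  assumes "g \<in> genGroup"
  shows "invertible g \<and> (\<forall>P\<in>XNy N y. g *v P \<in> XNy N y) \<and> (\<forall>P\<in>XNy N y. \<exists>Q\<in>XNy N y. P = g *v Q)"
  using assms
proof (induction rule: genGroup.induct)
  case gen_one
  then show ?case by (auto simp: invertible_def)
next
  case gen_R
  then show ?case using R_inv R_maps R_onto by blast
next
  case gen_s
  then show ?case using s_inv s_maps s_onto by blast
next
  case (gen_mult g h)
  have "invertible (g ** h)" using gen_mult invertible_mult by blast
  moreover have "\<forall>P\<in>XNy N y. (g ** h) *v P \<in> XNy N y"
    using gen_mult by (simp add: matrix_vector_mul_assoc[symmetric])
  moreover have "\<forall>P\<in>XNy N y. \<exists>Q\<in>XNy N y. P = (g ** h) *v Q"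
    using gen_mult by (metis matrix_vector_mul_assoc)
  ultimately show ?case by blast
next
  case (gen_inv g)
  have L: "matrix_inv g ** g = mat 1" and Rr: "g ** matrix_inv g = mat 1"
    using gen_inv minv by blast+
  have "invertible (matrix_inv g)" using L Rr invertible_def by blast
  moreover have "\<forall>P\<in>XNy N y. matrix_inv g *v P \<in> XNy N y"
  proof
    fix P assume "P \<in> XNy N y"
    then obtain Q where Q: "Q \<in> XNy N y" "P = g *v Q" using gen_inv by blast
    have "matrix_inv g *v P = Q" using Q(2) L by (simp add: matrix_vector_mul_assoc)
    then show "matrix_inv g *v P \<in> XNy N y" using Q by simp
  qed
  moreover have "\<forall>P\<in>XNy N y. \<exists>Q\<in>XNy N y. P = matrix_inv g *v Q"
  proof
    fix P assume "P \<in> XNy N y"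
    then have "g *v P \<in> XNy N y" using gen_inv by blast
    moreover have "P = matrix_inv g *v (g *v P)" using L by (simp add: matrix_vector_mul_assoc)
    ultimately show "\<exists>Q\<in>XNy N y. P = matrix_inv g *v Q" by blast
  qed
  ultimately show ?case by blast
qed

theorem proposition8p41:
  fixes N :: nat and y :: int
  assumes "y \<in> Gamma_N N"
  shows "\<forall>P \<in> XNy N y. {g *v P | g. g \<in> genGroup} \<subseteq> XNy N y"
  using inv_gen by blast

end
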